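(* Let $G$ be a finite nilpotent group. Then $P(G)$ is a cograph if and only if either $|G|$ is a power of a prime, or $G$ is cyclic of order $pq$ for distinct primes $p$ and $q$.
   Context: The power graph $P(G)$ of a group $G$ has vertex set $G$, with distinct $u,v$ adjacent if and only if $u=v^i$ or $v=u^j$ for some integers $i,j$. A cograph is a graph with no induced subgraph isomorphic to the path $P_4$ on four vertices. *)

theory Defs
  imports "HOL-Algebra.Algebra" "HOL-Computational_Algebra.Primes"
begin

definition lower_central_step :: "('a, 'b) monoid_scheme \<Rightarrow> 'a set \<Rightarrow> 'a set" where
  "lower_central_step G H =
     generate G {h \<otimes>\<^bsub>G\<^esub> g \<otimes>\<^bsub>G\<^esub> inv\<^bsub>G\<^esub> h \<otimes>\<^bsub>G\<^esub> inv\<^bsub>G\<^esub> g | h g. h \<in> H \<and> g \<in> carrier G}"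

definition nilpotent_group :: "('a, 'b) monoid_scheme \<Rightarrow> bool" where
  "nilpotent_group G \<longleftrightarrow> group G \<and>
     (\<exists>n. (lower_central_step G ^^ n) (carrier G) = {\<one>\<^bsub>G\<^esub>})"

definition power_adj :: "('a, 'b) monoid_scheme \<Rightarrow> 'a \<Rightarrow> 'a \<Rightarrow> bool" where
  "power_adj G u v \<longleftrightarrow> u \<in> carrier G \<and> v \<in> carrier G \<and> u \<noteq> v \<and>
     ((\<exists>i::int. u = v [^]\<^bsub>G\<^esub> i) \<or> (\<exists>j::int. v = u [^]\<^bsub>G\<^esub> j))"

definition cograph :: "'a set \<Rightarrow> ('a \<Rightarrow> 'a \<Rightarrow> bool) \<Rightarrow> bool" where
  "cograph V E \<longleftrightarrow> \<not> (\<exists>a\<in>V. \<exists>b\<in>V. \<exists>c\<in>V. \<exists>d\<in>V.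
      distinct [a, b, c, d] \<and> E a b \<and> E b c \<and> E c d \<and>
      \<not> E a c \<and> \<not> E b d \<and> \<not> E a d)"

definition power_graph_is_cograph :: "('a, 'b) monoid_scheme \<Rightarrow> bool" where
  "power_graph_is_cograph G \<longleftrightarrow> cograph (carrier G) (power_adj G)"

end

theory Submission
  imports Defs
begin

definition pw :: "('a, 'b) monoid_scheme \<Rightarrow> 'a \<Rightarrow> 'a \<Rightarrow> bool" where
  "pw G u v \<longleftrightarrow> (\<exists>i::int. u = v [^]\<^bsub>G\<^esub> i)"

lemma cograph_chain:
  assumes tr: "\<And>x y z. x \<in> V \<Longrightarrow> y \<in> V \<Longrightarrow> z \<in> V \<Longrightarrow> R x y \<Longrightarrow> R y z \<Longrightarrow> R x z"
    and ch: "\<And>x y z. x \<in> V \<Longrightarrow> y \<in> V \<Longrightarrow> z \<in> V \<Longrightarrow> R x z \<Longrightarrow> R y z \<Longrightarrow> R x y \<or> R y x"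
    and E: "\<And>u v. u \<in> V \<Longrightarrow> v \<in> V \<Longrightarrow> E u v \<longleftrightarrow> u \<noteq> v \<and> (R u v \<or> R v u)"
  shows "cograph V E"
  unfolding cograph_def
proof clarify
  fix a b c d assume V: "a \<in> V" "b \<in> V" "c \<in> V" "d \<in> V" and dist: "distinct [a,b,c,d]"
    and e: "E a b" "E b c" "E c d" "\<not> E a c" "\<not> E b d" "\<not> E a d"
  have ab: "R a b \<or> R b a" and bc: "R b c \<or> R c b" and cd: "R c d \<or> R d c"
    using e V E by auto
  have nac: "\<not> R a c" "\<not> R c a" and nbd: "\<not> R b d" "\<not> R d b" and nad: "\<not> R a d" "\<not> R d a"
    using e V E dist by auto
  show False
  proof (cases "R a b \<and> R c b")
    case True then show ?thesis using ch[of a c b] V nac by auto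
  next
    case False
    then have "R b a \<or> R b c" using ab bc by auto
    then show ?thesis
    proof
      assume ba: "R b a"
      have "\<not> R c b" using tr[of c b a] V ba nac by auto
      hence bc': "R b c" using bc by auto
      have "\<not> R c d" using tr[of b c d] V bc' nbd by auto
      hence "R d c" using cd by auto
      have "R c d \<or> R c b" using ch[of b d c] V bc' \<open>R d c\<close> nbd by auto
      thus False using \<open>\<not> R c d\<close> \<open>\<not> R c b\<close> by auto
    next
      assume bc': "R b c"
      have "\<not> R a b" using tr[of a b c] V bc' nac by auto
      hence ba: "R b a" using ab by auto
      have "\<not> R c b" using tr[of c b a] V ba nac by auto
      have "\<not> R c d" using tr[of b c d] V bc' nbd by auto
      hence "R d c" using cd by auto
      have "R b d \<or> R d b" using ch[of b d c] V bc' \<open>R d c\<close> by auto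
      thus False using nbd by auto
    qed
  qed
qed

context group begin

lemma pw_trans: "u \<in> carrier G \<Longrightarrow> v \<in> carrier G \<Longrightarrow> w \<in> carrier G \<Longrightarrow> pw G u v \<Longrightarrow> pw G v w \<Longrightarrow> pw G u w"
  unfolding pw_def by (metis int_pow_pow)

lemma pw_refl: "u \<in> carrier G \<Longrightarrow> pw G u u"
  unfolding pw_def by (metis int_pow_1)

lemma pw_closed: "v \<in> carrier G \<Longrightarrow> pw G u v \<Longrightarrow> u \<in> carrier G"
  unfolding pw_def by auto

lemma power_adj_pw: "u \<in> carrier G \<Longrightarrow> v \<in> carrier G \<Longrightarrow>
   power_adj G u v \<longleftrightarrow> u \<noteq> v \<and> (pw G u v \<or> pw G v u)"
  unfolding power_adj_def pw_def by auto

lemma Lif: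
  assumes z: "z \<in> carrier G" and n: "z [^] (n::int) = \<one>" and d: "gcd j n dvd i"
  shows "pw G (z [^] i) (z [^] j)"
proof -
  obtain u v where uv: "u * j + v * n = gcd j n" using bezout_int by blast
  obtain k where k: "i = gcd j n * k" using d by (auto elim: dvdE)
  have "i = (u * j + v * n) * k" using k uv by simp
  hence "i = j * (u * k) + n * (v * k)" by (simp add: algebra_simps)
  hence "z [^] i = z [^] (j * (u * k)) \<otimes> z [^] (n * (v * k))"
    by (simp add: int_pow_mult z)
  also have "\<dots> = (z [^] j) [^] (u * k)"
    using z n by (simp add: int_pow_pow[symmetric])
  finally show ?thesis unfolding pw_def by blast
qed

end


lemma gcd_primepow:
  fixes i :: int and p :: nat
  assumes "Factorial_Ring.prime p"
  shows "\<exists>a. gcd i (int (p ^ k)) = int (p ^ a)"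
proof -
  have "nat (gcd i (int (p ^ k))) dvd p ^ k"
    by (metis gcd_dvd2 gcd_ge_0_int nat_dvd_iff nat_int)
  then obtain a where "nat (gcd i (int (p ^ k))) = p ^ a"
    using divides_primepow_nat[OF assms] by blast
  thus ?thesis by (metis gcd_ge_0_int int_nat_eq)
qed

context group begin

lemma pgroup_cograph:
  assumes fin: "finite (carrier G)" and p: "Factorial_Ring.prime p" and ord: "order G = p ^ k"
  shows "power_graph_is_cograph G"
  unfolding power_graph_is_cograph_def
proof (rule cograph_chain[where R = "pw G"])
  show "\<And>x y z. x \<in> carrier G \<Longrightarrow> y \<in> carrier G \<Longrightarrow> z \<in> carrier G \<Longrightarrow> pw G x y \<Longrightarrow> pw G y z \<Longrightarrow> pw G x z"
    using pw_trans by blast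
  show "\<And>u v. u \<in> carrier G \<Longrightarrow> v \<in> carrier G \<Longrightarrow> power_adj G u v \<longleftrightarrow> u \<noteq> v \<and> (pw G u v \<or> pw G v u)"
    using power_adj_pw by blast
  fix x y z assume xyz: "x \<in> carrier G" "y \<in> carrier G" "z \<in> carrier G" and "pw G x z" "pw G y z"
  then obtain i j :: int where ij: "x = z [^] i" "y = z [^] j" unfolding pw_def by blast
  have zn: "z [^] (int (p ^ k)) = \<one>"
    using pow_order_eq_1[OF xyz(3)] ord by (metis int_pow_int)
  obtain a where a: "gcd i (int (p ^ k)) = int (p ^ a)" using gcd_primepow[OF p] by blast
  obtain b where b: "gcd j (int (p ^ k)) = int (p ^ b)" using gcd_primepow[OF p] by blast
  show "pw G x y \<or> pw G y x"
  proof (cases "a \<le> b")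
    case True
    hence "gcd i (int (p ^ k)) dvd gcd j (int (p ^ k))" unfolding a b
      by (simp add: le_imp_power_dvd)
    hence "gcd i (int (p ^ k)) dvd j" using dvd_trans gcd_dvd1 by blast
    thus ?thesis using Lif[OF xyz(3) zn] ij by auto
  next
    case False
    hence "gcd j (int (p ^ k)) dvd gcd i (int (p ^ k))" unfolding a b
      by (simp add: le_imp_power_dvd)
    hence "gcd j (int (p ^ k)) dvd i" using dvd_trans gcd_dvd1 by blast
    thus ?thesis using Lif[OF xyz(3) zn] ij by auto
  qed
qed

end


lemma divisors_pq:
  fixes p q :: nat and d :: int
  assumes p: "Factorial_Ring.prime p" and q: "Factorial_Ring.prime q" and d0: "d \<ge> 0"
    and d: "d dvd int p * int q"
  shows "d = 1 \<or> d = int p \<or> d = int q \<or> d = int p * int q"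
proof -
  define e where "e = nat d"
  have de: "d = int e" using d0 e_def by simp
  have e: "e dvd p * q" using d unfolding de by (metis of_nat_dvd_iff of_nat_mult)
  have "e = 1 \<or> e = p \<or> e = q \<or> e = p * q"
  proof (cases "p dvd e")
    case True
    then obtain f where f: "e = p * f" by (auto elim: dvdE)
    have "f dvd q" using e f p by (metis mult_dvd_mono dvd_mult_cancel_left nat_dvd_1_iff_1 prime_gt_0_nat
       dvd_times_left_cancel_iff not_prime_0)
    hence "f = 1 \<or> f = q" using q prime_nat_iff by blast
    thus ?thesis using f by auto
  next
    case False
    hence "coprime p e" using p by (simp add: prime_imp_coprime)
    hence "e dvd q" using e by (metis coprime_commute coprime_dvd_mult_right_iff)
    hence "e = 1 \<or> e = q" using q prime_nat_iff by blast
    thus ?thesis by auto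
  qed
  thus ?thesis unfolding de by auto
qed

lemma lab4:
  fixes p q :: nat and uu vv :: int
  assumes p: "Factorial_Ring.prime p" and q: "Factorial_Ring.prime q" and pq: "p \<noteq> q"
    and uu: "uu \<in> {1, int p, int q, int p * int q}" and vv: "vv \<in> {1, int p, int q, int p * int q}"
    and n: "\<not> uu dvd vv" "\<not> vv dvd uu"
  shows "(uu = int p \<and> vv = int q) \<or> (uu = int q \<and> vv = int p)"
  using uu vv n by auto

lemma distinct_primes_ndvd:
  fixes p q :: nat
  assumes p: "Factorial_Ring.prime p" and q: "Factorial_Ring.prime q" and pq: "p \<noteq> q"
  shows "\<not> int p dvd int q"
  using assms by (metis of_nat_dvd_iff prime_nat_iff prime_gt_1_nat less_irrefl)

context group begin

lemma cyclic_pq_cograph: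
  assumes fin: "finite (carrier G)" and p: "Factorial_Ring.prime p" and q: "Factorial_Ring.prime q"
    and pq: "p \<noteq> q" and ord: "order G = p * q" and cyc: "cyclic_group G"
  shows "power_graph_is_cograph G"
proof -
  obtain g where g: "g \<in> carrier G" "carrier G = range (\<lambda>n::int. g [^] n)"
    using cyc cyclic_group by blast
  have "ord g = card (generate G {g})" using generate_pow_card[OF g(1)] .
  also have "generate G {g} = carrier G" using generate_pow[OF g(1)] g(2) by auto
  finally have og: "ord g = p * q" using ord unfolding order_def by simp
  define n :: int where "n = int p * int q"
  have key: "pw G (g [^] i) (g [^] j) \<longleftrightarrow> gcd j n dvd gcd i n" for i j :: int
  proof
    assume "pw G (g [^] i) (g [^] j)"
    then obtain t :: int where "g [^] i = (g [^] j) [^] t" unfolding pw_def by blast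
    hence "g [^] (j * t) = g [^] i" using g(1) by (simp add: int_pow_pow)
    hence "n dvd i - j * t" using int_pow_eq[OF g(1)] og n_def by simp
    hence "gcd j n dvd i"
      by (metis dvd_diff_commute dvd_mult2 gcd_dvd1 gcd_dvd2 dvd_trans dvd_add_left_iff diff_add_cancel)
    thus "gcd j n dvd gcd i n" by simp
  next
    assume "gcd j n dvd gcd i n"
    hence "gcd j n dvd i" using dvd_trans gcd_dvd1 by blast
    moreover have "g [^] n = \<one>" using int_pow_eq_id[OF g(1)] og n_def by simp
    ultimately show "pw G (g [^] i) (g [^] j)" using Lif[OF g(1)] by blast
  qed
  have lab: "gcd i n \<in> {1, int p, int q, int p * int q}" for i
    using divisors_pq[OF p q, of "gcd i n"] n_def by auto
  have nd: "\<not> int p dvd int q" "\<not> int q dvd int p"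
    using distinct_primes_ndvd p q pq by metis+
  show ?thesis
    unfolding power_graph_is_cograph_def cograph_def
  proof clarify
    fix a b c d assume V: "a \<in> carrier G" "b \<in> carrier G" "c \<in> carrier G" "d \<in> carrier G"
      and dist: "distinct [a,b,c,d]"
      and e: "power_adj G a b" "power_adj G b c" "power_adj G c d" "\<not> power_adj G a c"
         "\<not> power_adj G b d" "\<not> power_adj G a d"
    have allg: "\<forall>x\<in>carrier G. \<exists>i::int. x = g [^] i" using g(2) by auto
    obtain ia ib ic id :: int where abcd: "a = g [^] ia" "b = g [^] ib" "c = g [^] ic" "d = g [^] id"
      using V allg by meson
    have bc: "gcd ic n dvd gcd ib n \<or> gcd ib n dvd gcd ic n"
      using e(2) V power_adj_pw key abcd by metis
    have ac: "\<not> gcd ic n dvd gcd ia n" "\<not> gcd ia n dvd gcd ic n"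
      using e(4) V power_adj_pw key abcd dist by (metis distinct_length_2_or_more)+
    have bd: "\<not> gcd id n dvd gcd ib n" "\<not> gcd ib n dvd gcd id n"
      using e(5) V power_adj_pw key abcd dist by auto
    have ad: "\<not> gcd id n dvd gcd ia n" "\<not> gcd ia n dvd gcd id n"
      using e(6) V power_adj_pw key abcd dist by auto
    show False
      using lab4[OF p q pq lab lab ac(2) ac(1)] lab4[OF p q pq lab lab bd(2) bd(1)]
        lab4[OF p q pq lab lab ad(2) ad(1)] bc nd by (elim disjE conjE; simp only:)
  qed
qed

end


context group begin

lemma conj_mult: "k \<in> carrier G \<Longrightarrow> x \<in> carrier G \<Longrightarrow> y \<in> carrier G \<Longrightarrow>
  k \<otimes> (x \<otimes> y) \<otimes> inv k = (k \<otimes> x \<otimes> inv k) \<otimes> (k \<otimes> y \<otimes> inv k)"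
  by (simp add: m_assoc, simp add: m_assoc[symmetric])

lemma conj_inv: "k \<in> carrier G \<Longrightarrow> x \<in> carrier G \<Longrightarrow>
  k \<otimes> inv x \<otimes> inv k = inv (k \<otimes> x \<otimes> inv k)"
  by (simp add: inv_mult_group m_assoc)

lemma gen_comm_pow:
  assumes xa: "xa \<in> carrier G" and ya: "ya \<in> carrier G" and ca: "ca \<in> carrier G"
    and e: "xa \<otimes> ya \<otimes> inv xa = ca \<otimes> ya" and cx: "ca \<otimes> xa = xa \<otimes> ca"
  shows "xa [^] (m::nat) \<otimes> ya \<otimes> inv (xa [^] m) = ca [^] m \<otimes> ya"
proof (induction m)
  case 0 then show ?case using ya by simp
next
  case (Suc m)
  have "xa [^] Suc m \<otimes> ya \<otimes> inv (xa [^] Suc m) = xa [^] m \<otimes> (xa \<otimes> ya \<otimes> inv xa) \<otimes> inv (xa [^] m)"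
    using xa ya by (simp add: m_assoc inv_mult_group)
  also have "\<dots> = xa [^] m \<otimes> ca \<otimes> (ya \<otimes> inv (xa [^] m))" using e xa ya ca by (simp add: m_assoc)
  also have "\<dots> = ca \<otimes> (xa [^] m \<otimes> ya \<otimes> inv (xa [^] m))"
    using group_commutes_pow[OF cx[symmetric] xa ca] xa ya ca by (simp add: m_assoc)
  also have "\<dots> = ca [^] Suc m \<otimes> ya" using Suc ca ya by (simp add: m_assoc[symmetric] group_commutes_pow)
  finally show ?case .
qed

lemma comm_pow_one:
  assumes xa: "xa \<in> carrier G" and ya: "ya \<in> carrier G" and ca: "ca \<in> carrier G"
    and e: "xa \<otimes> ya \<otimes> inv xa = ca \<otimes> ya" and cx: "ca \<otimes> xa = xa \<otimes> ca" and xm: "xa [^] (m::nat) = \<one>"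
  shows "ca [^] m = \<one>"
proof -
  have "ca [^] m \<otimes> ya = ya" using gen_comm_pow[OF xa ya ca e cx, of m] xm ya by simp
  thus ?thesis using ca ya by (metis l_one nat_pow_closed one_closed r_cancel)
qed

end


context group begin

lemma inv_cancel1 [simp]: "x \<in> carrier G \<Longrightarrow> y \<in> carrier G \<Longrightarrow> inv x \<otimes> (x \<otimes> y) = y"
  by (simp add: m_assoc[symmetric])

lemma inv_cancel2 [simp]: "x \<in> carrier G \<Longrightarrow> y \<in> carrier G \<Longrightarrow> x \<otimes> (inv x \<otimes> y) = y"
  by (simp add: m_assoc[symmetric])

lemma comm_from_commutator:
  assumes a: "a \<in> carrier G" and b: "b \<in> carrier G" and h: "a \<otimes> b \<otimes> inv a \<otimes> inv b = \<one>"
  shows "a \<otimes> b = b \<otimes> a"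
proof -
  have "a \<otimes> b = (a \<otimes> b \<otimes> inv a \<otimes> inv b) \<otimes> (b \<otimes> a)" using a b by (simp add: m_assoc)
  also have "\<dots> = b \<otimes> a" using h a b by simp
  finally show ?thesis .
qed

lemma commutator_right:
  "a \<in> carrier G \<Longrightarrow> b \<in> carrier G \<Longrightarrow> a \<otimes> b \<otimes> inv a = (a \<otimes> b \<otimes> inv a \<otimes> inv b) \<otimes> b"
  by (simp add: m_assoc)

lemma commutator_inv:
  "a \<in> carrier G \<Longrightarrow> b \<in> carrier G \<Longrightarrow> inv (a \<otimes> b \<otimes> inv a \<otimes> inv b) = b \<otimes> a \<otimes> inv b \<otimes> inv a"
  by (simp add: inv_mult_group m_assoc)

lemma comm_inv_comm:
  assumes a: "a \<in> carrier G" and b: "b \<in> carrier G" and h: "a \<otimes> b = b \<otimes> a"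
  shows "inv a \<otimes> b = b \<otimes> inv a"
proof -
  have "inv a \<otimes> b = inv a \<otimes> (b \<otimes> a) \<otimes> inv a" using a b by (simp add: m_assoc)
  also have "\<dots> = inv a \<otimes> (a \<otimes> b) \<otimes> inv a" using h by simp
  also have "\<dots> = b \<otimes> inv a" using a b by (simp add: m_assoc[symmetric])
  finally show ?thesis .
qed

lemma commutator_trivial_coprime:
  assumes x: "x \<in> carrier G" and y: "y \<in> carrier G" and cop: "coprime (ord x) (ord y)"
    and c: "c = x \<otimes> y \<otimes> inv x \<otimes> inv y"
    and cx: "c \<otimes> x = x \<otimes> c" and cy: "c \<otimes> y = y \<otimes> c"
  shows "c = \<one>"
proof -
  have cC: "c \<in> carrier G" using c x y by simp
  have e1: "x \<otimes> y \<otimes> inv x = c \<otimes> y" unfolding c by (rule commutator_right[OF x y])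
  have e2: "y \<otimes> x \<otimes> inv y = inv c \<otimes> x" unfolding c commutator_inv[OF x y] by (rule commutator_right[OF y x])
  have "c [^] ord x = \<one>" using comm_pow_one[OF x y cC e1 cx] x by simp
  hence d1: "ord c dvd ord x" using pow_eq_id[OF cC] by simp
  have "inv c [^] ord y = \<one>"
    using comm_pow_one[OF y x _ e2] cC y comm_inv_comm[OF cC y cy] by simp
  hence "inv (c [^] ord y) = \<one>" using nat_pow_inv[OF cC] by simp
  hence "c [^] ord y = \<one>" using cC by (metis inv_one inv_inv nat_pow_closed)
  hence d2: "ord c dvd ord y" using pow_eq_id[OF cC] by simp
  have "ord c = 1" using coprime_common_divisor_nat[OF cop d1 d2] .
  thus ?thesis using ord_eq_1[OF cC] by simp
qed


lemma comm_in_normal: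
  assumes N: "N \<lhd> G" and x: "x \<in> carrier G" and y: "y \<in> carrier G"
    and cop: "coprime (ord x) (ord y)"
    and cz: "\<And>z. z \<in> carrier G \<Longrightarrow> (x \<otimes> y \<otimes> inv x \<otimes> inv y) \<otimes> z \<otimes> inv (x \<otimes> y \<otimes> inv x \<otimes> inv y) \<otimes> inv z \<in> N"
  shows "x \<otimes> y \<otimes> inv x \<otimes> inv y \<in> N"
proof -
  define c where "c = x \<otimes> y \<otimes> inv x \<otimes> inv y"
  have cC: "c \<in> carrier G" using c_def x y by simp
  have Qg: "group (G Mod N)" using normal.factorgroup_is_group[OF N] .
  define f where "f = (\<lambda>a. N #> a)"
  have hG: "group_hom G (G Mod N) f"
    unfolding group_hom_def group_hom_axioms_def f_def
    using Qg normal.r_coset_hom_Mod[OF N] is_group by simp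
  note hm = group_hom.hom_mult[OF hG]
  note hi = group_hom.hom_inv[OF hG]
  note hc = group_hom.hom_closed[OF hG]
  note hp = group_hom.hom_nat_pow[OF hG]
  have N1: "f n = \<one>\<^bsub>G Mod N\<^esub>" if "n \<in> N" for n
    unfolding f_def using that normal_imp_subgroup[OF N] by (simp add: subgroup.rcos_const is_group)
  have fc: "f c = f x \<otimes>\<^bsub>G Mod N\<^esub> f y \<otimes>\<^bsub>G Mod N\<^esub> inv\<^bsub>G Mod N\<^esub> (f x) \<otimes>\<^bsub>G Mod N\<^esub> inv\<^bsub>G Mod N\<^esub> (f y)"
    unfolding c_def using x y by (simp add: hm hi)
  have comm: "f c \<otimes>\<^bsub>G Mod N\<^esub> f z = f z \<otimes>\<^bsub>G Mod N\<^esub> f c" if z: "z \<in> carrier G" for z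
  proof -
    have "f (c \<otimes> z \<otimes> inv c \<otimes> inv z) = \<one>\<^bsub>G Mod N\<^esub>" using N1 cz[OF z] c_def by simp
    hence "f c \<otimes>\<^bsub>G Mod N\<^esub> f z \<otimes>\<^bsub>G Mod N\<^esub> inv\<^bsub>G Mod N\<^esub> (f c) \<otimes>\<^bsub>G Mod N\<^esub> inv\<^bsub>G Mod N\<^esub> (f z) = \<one>\<^bsub>G Mod N\<^esub>"
      using cC z by (simp add: hm hi)
    thus ?thesis using group.comm_from_commutator[OF Qg hc[OF cC] hc[OF z]] by blast
  qed
  have ox: "group.ord (G Mod N) (f x) dvd ord x"
  proof -
    have "f (x [^] ord x) = \<one>\<^bsub>G Mod N\<^esub>" using x N1[OF subgroup.one_closed[OF normal_imp_subgroup[OF N]]] by simp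
    hence "f x [^]\<^bsub>G Mod N\<^esub> ord x = \<one>\<^bsub>G Mod N\<^esub>" using hp[OF x] by simp
    thus ?thesis using group.pow_eq_id[OF Qg hc[OF x]] by simp
  qed
  have oy: "group.ord (G Mod N) (f y) dvd ord y"
  proof -
    have "f (y [^] ord y) = \<one>\<^bsub>G Mod N\<^esub>" using y N1[OF subgroup.one_closed[OF normal_imp_subgroup[OF N]]] by simp
    hence "f y [^]\<^bsub>G Mod N\<^esub> ord y = \<one>\<^bsub>G Mod N\<^esub>" using hp[OF y] by simp
    thus ?thesis using group.pow_eq_id[OF Qg hc[OF y]] by simp
  qed
  have cop': "coprime (group.ord (G Mod N) (f x)) (group.ord (G Mod N) (f y))"
    using cop ox oy by (meson coprime_commute coprime_divisors)
  have "f c = \<one>\<^bsub>G Mod N\<^esub>"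
    using group.commutator_trivial_coprime[OF Qg hc[OF x] hc[OF y] cop' fc]
      comm[OF x] comm[OF y] by simp
  hence "f c = N" by simp
  hence "c \<in> N" unfolding f_def using rcos_self[OF cC normal_imp_subgroup[OF N]] by simp
  thus ?thesis unfolding c_def .
qed

end


context group begin

definition conj_closed :: "'a set \<Rightarrow> bool" where
  "conj_closed H \<longleftrightarrow> H \<subseteq> carrier G \<and> (\<forall>k\<in>carrier G. \<forall>h\<in>H. k \<otimes> h \<otimes> inv k \<in> H)"

lemma gen_conj:
  assumes S: "conj_closed S" and h: "h \<in> generate G S" and k: "k \<in> carrier G"
  shows "k \<otimes> h \<otimes> inv k \<in> generate G S"
  using h
proof (induction rule: generate.induct)
  case one then show ?case using k by (simp add: generate.one)
next
  case (incl h) then show ?case using S k unfolding conj_closed_def by (blast intro: generate.incl)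
next
  case (inv h)
  have hc: "h \<in> carrier G" using inv S unfolding conj_closed_def by blast
  have "k \<otimes> h \<otimes> inv k \<in> S" using inv S k unfolding conj_closed_def by blast
  hence "inv (k \<otimes> h \<otimes> inv k) \<in> generate G S" by (rule generate.inv)
  thus ?case using conj_inv[OF k hc] by simp
next
  case (eng h1 h2)
  have sc: "S \<subseteq> carrier G" using S unfolding conj_closed_def by blast
  have c1: "h1 \<in> carrier G" and c2: "h2 \<in> carrier G"
    using eng.hyps generate_in_carrier[OF sc] by blast+
  show ?case using conj_mult[OF k c1 c2] generate.eng[OF eng.IH] by simp
qed

lemma lcs_step:
  assumes H: "conj_closed H"
  shows "conj_closed (lower_central_step G H) \<and> lower_central_step G H \<lhd> G"
proof -
  define S where "S = {h \<otimes> g \<otimes> inv h \<otimes> inv g | h g. h \<in> H \<and> g \<in> carrier G}"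
  have Hc: "H \<subseteq> carrier G" using H unfolding conj_closed_def by blast
  have Sc: "S \<subseteq> carrier G"
  proof
    fix s assume "s \<in> S"
    then obtain h g where "h \<in> H" "g \<in> carrier G" "s = h \<otimes> g \<otimes> inv h \<otimes> inv g"
      unfolding S_def by auto
    thus "s \<in> carrier G" using Hc by auto
  qed
  have "conj_closed S" unfolding conj_closed_def
  proof (intro conjI Sc ballI)
    fix k s assume k: "k \<in> carrier G" and "s \<in> S"
    then obtain h g where hg: "h \<in> H" "g \<in> carrier G" "s = h \<otimes> g \<otimes> inv h \<otimes> inv g"
      unfolding S_def by auto
    have h: "h \<in> carrier G" using hg Hc by blast
    have kh: "k \<otimes> h \<otimes> inv k \<in> H" using H k hg unfolding conj_closed_def by blast
    have kg: "k \<otimes> g \<otimes> inv k \<in> carrier G" using k hg by simp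
    have "k \<otimes> s \<otimes> inv k = (k \<otimes> h \<otimes> inv k) \<otimes> (k \<otimes> g \<otimes> inv k) \<otimes> inv (k \<otimes> h \<otimes> inv k) \<otimes> inv (k \<otimes> g \<otimes> inv k)"
    proof -
      have g: "g \<in> carrier G" using hg by simp
      have "k \<otimes> s \<otimes> inv k = (k \<otimes> (h \<otimes> g \<otimes> inv h) \<otimes> inv k) \<otimes> (k \<otimes> inv g \<otimes> inv k)"
        unfolding hg(3) using k h g by (intro conj_mult) auto
      also have "k \<otimes> (h \<otimes> g \<otimes> inv h) \<otimes> inv k = (k \<otimes> (h \<otimes> g) \<otimes> inv k) \<otimes> (k \<otimes> inv h \<otimes> inv k)"
        using k h g by (intro conj_mult) auto
      also have "k \<otimes> (h \<otimes> g) \<otimes> inv k = (k \<otimes> h \<otimes> inv k) \<otimes> (k \<otimes> g \<otimes> inv k)"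
        using k h g by (intro conj_mult) auto
      also have "k \<otimes> inv h \<otimes> inv k = inv (k \<otimes> h \<otimes> inv k)" using conj_inv[OF k h] .
      also have "k \<otimes> inv g \<otimes> inv k = inv (k \<otimes> g \<otimes> inv k)" using conj_inv[OF k g] .
      finally show ?thesis .
    qed
    thus "k \<otimes> s \<otimes> inv k \<in> S" unfolding S_def using kh kg by auto
  qed
  hence cc: "conj_closed (generate G S)"
    using gen_conj generate_incl[OF Sc] unfolding conj_closed_def[of "generate G S"] by blast
  have "generate G S \<lhd> G" unfolding normal_inv_iff
    using generate_is_subgroup[OF Sc] cc unfolding conj_closed_def by auto
  moreover have "lower_central_step G H = generate G S"
    unfolding lower_central_step_def S_def by simp
  ultimately show ?thesis using cc by simp
qed

lemma lcs_iter: "conj_closed ((lower_central_step G ^^ n) (carrier G))"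
proof (induction n)
  case 0 then show ?case unfolding conj_closed_def by simp
next
  case (Suc n) then show ?case using lcs_step by simp
qed

lemma nilpotent_comm:
  assumes nil: "nilpotent_group G" and x: "x \<in> carrier G" and y: "y \<in> carrier G"
    and cop: "coprime (ord x) (ord y)"
  shows "x \<otimes> y = y \<otimes> x"
proof -
  define L where "L n = (lower_central_step G ^^ n) (carrier G)" for n
  have mem: "x \<otimes> y \<otimes> inv x \<otimes> inv y \<in> L n" for n
  proof (induction n)
    case 0 then show ?case using x y unfolding L_def by simp
  next
    case (Suc n)
    have N: "L (Suc n) \<lhd> G" using lcs_step[OF lcs_iter[of n]] unfolding L_def by simp
    show ?case
    proof (rule comm_in_normal[OF N x y cop])
      fix z assume z: "z \<in> carrier G"
      show "x \<otimes> y \<otimes> inv x \<otimes> inv y \<otimes> z \<otimes> inv (x \<otimes> y \<otimes> inv x \<otimes> inv y) \<otimes> inv z \<in> L (Suc n)"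
      proof -
        have "x \<otimes> y \<otimes> inv x \<otimes> inv y \<otimes> z \<otimes> inv (x \<otimes> y \<otimes> inv x \<otimes> inv y) \<otimes> inv z
          \<in> {h \<otimes> g \<otimes> inv h \<otimes> inv g | h g. h \<in> L n \<and> g \<in> carrier G}"
          using Suc z by blast
        hence "x \<otimes> y \<otimes> inv x \<otimes> inv y \<otimes> z \<otimes> inv (x \<otimes> y \<otimes> inv x \<otimes> inv y) \<otimes> inv z
          \<in> lower_central_step G (L n)" unfolding lower_central_step_def by (rule generate.incl)
        thus ?thesis unfolding L_def by simp
      qed
    qed
  qed
  obtain n where "L n = {\<one>}" using nil unfolding nilpotent_group_def L_def by blast
  hence "x \<otimes> y \<otimes> inv x \<otimes> inv y = \<one>" using mem[of n] by simp
  thus ?thesis using comm_from_commutator[OF x y] by blast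
qed

end


context group begin

lemma ord_dvd_of_pw:
  assumes u: "u \<in> carrier G" and w: "pw G w u"
  shows "ord w dvd ord u"
proof -
  obtain i :: int where i: "w = u [^] i" using w unfolding pw_def by blast
  have wc: "w \<in> carrier G" using i u by simp
  have "w [^] (int (ord u)) = (u [^] (int (ord u))) [^] i" using i u by (simp add: int_pow_pow mult.commute)
  also have "u [^] (int (ord u)) = \<one>" using int_pow_eq_id[OF u] by simp
  finally have "w [^] (int (ord u)) = \<one>" by simp
  thus ?thesis using int_pow_eq_id[OF wc] by simp
qed

lemma pw_mult_comm:
  assumes a: "a \<in> carrier G" and b: "b \<in> carrier G" and ab: "a \<otimes> b = b \<otimes> a"
    and cop: "coprime (ord a) (ord b)"
  shows "pw G a (a \<otimes> b)"
proof -
  have "coprime (int (ord b)) (int (ord a))" using cop by (simp add: coprime_commute)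
  then obtain u v :: int where uv: "u * int (ord b) + v * int (ord a) = 1"
    using bezout_int[of "int (ord b)" "int (ord a)"] by (auto simp: coprime_iff_gcd_eq_1)
  have bb: "b [^] (int (ord b) * u) = \<one>" using int_pow_eq_id[OF b] by simp
  have aa: "a [^] (int (ord a) * v) = \<one>" using int_pow_eq_id[OF a] by simp
  have "(a \<otimes> b) [^] (int (ord b) * u) = a [^] (int (ord b) * u) \<otimes> b [^] (int (ord b) * u)"
    using int_pow_mult_distrib[OF ab a b] .
  also have "\<dots> = a [^] (int (ord b) * u)" using bb a by simp
  also have "\<dots> = a [^] (int (ord b) * u) \<otimes> a [^] (int (ord a) * v)" using aa a by simp
  also have "\<dots> = a [^] (int (ord b) * u + int (ord a) * v)" using a by (simp add: int_pow_mult)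
  also have "int (ord b) * u + int (ord a) * v = 1" using uv by (simp add: mult.commute)
  finally have "a = (a \<otimes> b) [^] (int (ord b) * u)" using a by simp
  thus ?thesis unfolding pw_def by blast
qed

lemma pw_proj:
  assumes a: "a \<in> carrier G" and b: "b \<in> carrier G" and ab: "a \<otimes> b = b \<otimes> a"
    and cop: "coprime (ord a) (ord b)" and w: "pw G w (a \<otimes> b)" and o: "ord w dvd ord a"
  shows "pw G w a"
proof -
  obtain i :: int where i: "w = (a \<otimes> b) [^] i" using w unfolding pw_def by blast
  have wi: "w = a [^] i \<otimes> b [^] i" using i int_pow_mult_distrib[OF ab a b] by simp
  have wc: "w \<in> carrier G" using wi a b by simp
  have "w [^] (int (ord a)) = \<one>" using int_pow_eq_id[OF wc] o by simp
  hence "(a [^] i \<otimes> b [^] i) [^] (int (ord a)) = \<one>" using wi by simp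
  moreover have "a [^] i \<otimes> b [^] i = b [^] i \<otimes> a [^] i"
    using ab a b by (metis int_pow_mult_distrib)
  ultimately have "(a [^] i) [^] (int (ord a)) \<otimes> (b [^] i) [^] (int (ord a)) = \<one>"
    using int_pow_mult_distrib[of "a [^] i" "b [^] i" "int (ord a)"] a b by simp
  moreover have "(a [^] i) [^] (int (ord a)) = \<one>"
    using a int_pow_eq_id[OF a] by (simp add: int_pow_pow)
  ultimately have "(b [^] i) [^] (int (ord a)) = \<one>" using a b by simp
  hence "b [^] (i * int (ord a)) = \<one>" using b by (simp add: int_pow_pow)
  hence "int (ord b) dvd i * int (ord a)" using int_pow_eq_id[OF b] by simp
  moreover have "coprime (int (ord b)) (int (ord a))" using cop by (simp add: coprime_commute)
  ultimately have "int (ord b) dvd i" using coprime_dvd_mult_left_iff by blast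
  hence "b [^] i = \<one>" using int_pow_eq_id[OF b] by simp
  hence "w = a [^] i" using wi a by simp
  thus ?thesis unfolding pw_def by blast
qed

lemma card_subgroup_dvd:
  assumes "subgroup I G" "subgroup J G" "I \<subseteq> J"
  shows "card I dvd card J"
proof -
  have sI: "subgroup I (G\<lparr>carrier := J\<rparr>)" using subgroup_incl[OF assms] .
  have gJ: "group (G\<lparr>carrier := J\<rparr>)" using subgroup_imp_group[OF assms(2)] .
  have "card (rcosets\<^bsub>G\<lparr>carrier := J\<rparr>\<^esub> I) * card I = order (G\<lparr>carrier := J\<rparr>)"
    using group.lagrange[OF gJ sI] .
  hence "card (rcosets\<^bsub>G\<lparr>carrier := J\<rparr>\<^esub> I) * card I = card J" unfolding order_def by simp
  thus ?thesis by (metis dvd_triv_right)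
qed

lemma ord_dvd_card_subgroup:
  assumes H: "subgroup H G" and h: "h \<in> H"
  shows "ord h dvd card H"
proof -
  have hc: "h \<in> carrier G" using H h subgroup.subset by blast
  have "generate G {h} \<subseteq> H" using generate_subgroup_incl[OF _ H] h by simp
  moreover have "subgroup (generate G {h}) G" using generate_is_subgroup hc by simp
  ultimately have "card (generate G {h}) dvd card H" using card_subgroup_dvd H by blast
  thus ?thesis using generate_pow_card[OF hc] by simp
qed

lemma card_generate_ord: "h \<in> carrier G \<Longrightarrow> card (generate G {h}) = ord h"
  using generate_pow_card by simp

lemma subgroup_prime_power:
  assumes fin: "finite (carrier G)" and p: "Factorial_Ring.prime (p::nat)" and d: "p ^ a dvd order G"
  shows "\<exists>H. subgroup H G \<and> card H = p ^ a"
proof -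
  obtain m where "order G = p ^ a * m" using d by (auto elim: dvdE)
  thus ?thesis using sylow_thm[OF p is_group _ fin] by blast
qed

lemma cauchy:
  assumes fin: "finite (carrier G)" and p: "Factorial_Ring.prime (p::nat)" and d: "p dvd order G"
  shows "\<exists>x\<in>carrier G. ord x = p"
proof -
  obtain H where H: "subgroup H G" "card H = p" using subgroup_prime_power[OF fin p, of 1] d by auto
  have "card H > 1" using H p prime_gt_1_nat by simp
  have "\<not> H \<subseteq> {\<one>}"
  proof
    assume "H \<subseteq> {\<one>}"
    hence "card H \<le> card {\<one>}" by (intro card_mono) auto
    thus False using \<open>card H > 1\<close> by simp
  qed
  then obtain h where h: "h \<in> H" "h \<noteq> \<one>" by blast
  have hc: "h \<in> carrier G" using H h subgroup.subset by blast
  have "ord h dvd p" using ord_dvd_card_subgroup[OF H(1) h(1)] H by simp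
  moreover have "ord h \<noteq> 1" using ord_eq_1[OF hc] h by simp
  ultimately have "ord h = p" using p prime_nat_iff by blast
  thus ?thesis using hc by blast
qed

end


context group begin

lemma not_cograph_P4:
  assumes abcd: "a \<in> carrier G" "b \<in> carrier G" "c \<in> carrier G" "d \<in> carrier G"
    and e1: "pw G a b \<or> pw G b a" and e2: "pw G b c \<or> pw G c b" and e3: "pw G c d \<or> pw G d c"
    and n1: "\<not> pw G a c" "\<not> pw G c a" and n2: "\<not> pw G b d" "\<not> pw G d b"
    and n3: "\<not> pw G a d" "\<not> pw G d a"
    and d1: "a \<noteq> b" and d2: "b \<noteq> c" and d3: "c \<noteq> d"
  shows "\<not> power_graph_is_cograph G"
proof -
  have "a \<noteq> c" "b \<noteq> d" "a \<noteq> d" using n1 n2 n3 pw_refl abcd by auto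
  hence "distinct [a,b,c,d]" using d1 d2 d3 by auto
  moreover have "power_adj G a b" "power_adj G b c" "power_adj G c d"
    using power_adj_pw abcd e1 e2 e3 d1 d2 d3 by auto
  moreover have "\<not> power_adj G a c" "\<not> power_adj G b d" "\<not> power_adj G a d"
    using power_adj_pw abcd n1 n2 n3 by auto
  ultimately show ?thesis unfolding power_graph_is_cograph_def cograph_def using abcd by blast
qed

lemma pw_comm2:
  assumes a: "a \<in> carrier G" and b: "b \<in> carrier G" and ab: "a \<otimes> b = b \<otimes> a"
    and cop: "coprime (ord a) (ord b)"
  shows "pw G a (a \<otimes> b)" "pw G b (a \<otimes> b)"
  using pw_mult_comm[OF a b ab cop] pw_mult_comm[OF b a ab[symmetric]] cop ab
  by (auto simp: coprime_commute)

lemma npw_ord: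
  assumes v: "v \<in> carrier G" and n: "\<not> ord u dvd ord v"
  shows "\<not> pw G u v"
  using ord_dvd_of_pw[OF v] n by blast

lemma caseA:
  assumes nil: "nilpotent_group G" and fin: "finite (carrier G)"
    and p: "Factorial_Ring.prime (p::nat)" and q: "Factorial_Ring.prime q" and r: "Factorial_Ring.prime r"
    and pq: "p \<noteq> q" and pr: "p \<noteq> r" and qr: "q \<noteq> r"
    and dp: "p dvd order G" and dq: "q dvd order G" and dr: "r dvd order G"
  shows "\<not> power_graph_is_cograph G"
proof -
  obtain x where x: "x \<in> carrier G" "ord x = p" using cauchy[OF fin p dp] by blast
  obtain y where y: "y \<in> carrier G" "ord y = q" using cauchy[OF fin q dq] by blast
  obtain z where z: "z \<in> carrier G" "ord z = r" using cauchy[OF fin r dr] by blast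
  have cxy: "coprime (ord x) (ord y)" using x y p q pq by (simp add: primes_coprime)
  have cyz: "coprime (ord y) (ord z)" using z y r q qr by (simp add: primes_coprime)
  have xy: "x \<otimes> y = y \<otimes> x" using nilpotent_comm[OF nil x(1) y(1) cxy] .
  have yz: "y \<otimes> z = z \<otimes> y" using nilpotent_comm[OF nil y(1) z(1) cyz] .
  note P1 = pw_comm2[OF x(1) y(1) xy cxy]
  note P2 = pw_comm2[OF y(1) z(1) yz cyz]
  have oxy: "ord (x \<otimes> y) dvd p * q" using ord_mul_divides[OF xy x(1) y(1)] x y by simp
  have oyz: "ord (y \<otimes> z) dvd q * r" using ord_mul_divides[OF yz y(1) z(1)] z y by simp
  have xyc: "x \<otimes> y \<in> carrier G" and yzc: "y \<otimes> z \<in> carrier G" using x y z by auto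
  have npq: "\<not> p dvd q" "\<not> q dvd p" "\<not> p dvd r" "\<not> r dvd p" "\<not> q dvd r" "\<not> r dvd q"
    using p q r pq pr qr by (metis prime_nat_iff prime_gt_1_nat less_irrefl)+
  have n_xy: "\<not> pw G x y" "\<not> pw G y x" using npw_ord x y npq by auto
  have n_x_yz: "\<not> pw G x (y \<otimes> z)"
  proof
    assume "pw G x (y \<otimes> z)"
    hence "p dvd q * r" using ord_dvd_of_pw[OF yzc] oyz x by (metis dvd_trans)
    thus False using p npq by (simp add: prime_dvd_mult_iff)
  qed
  have n_yz_x: "\<not> pw G (y \<otimes> z) x" using pw_trans[OF y(1) yzc x(1) P2(1)] n_xy by blast
  have n_xy_yz: "\<not> pw G (x \<otimes> y) (y \<otimes> z)" using pw_trans[OF x(1) xyc yzc P1(1)] n_x_yz by blast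
  have n_yz_xy: "\<not> pw G (y \<otimes> z) (x \<otimes> y)"
  proof
    assume "pw G (y \<otimes> z) (x \<otimes> y)"
    hence "pw G z (x \<otimes> y)" using pw_trans[OF z(1) yzc xyc P2(2)] by blast
    hence "r dvd p * q" using ord_dvd_of_pw[OF xyc] oxy z by (metis dvd_trans)
    thus False using r npq by (simp add: prime_dvd_mult_iff)
  qed
  have d3: "y \<noteq> y \<otimes> z"
  proof
    assume "y = y \<otimes> z" hence "pw G z y" using P2(2) by simp
    thus False using npw_ord y z npq by auto
  qed
  show ?thesis
    using not_cograph_P4[OF x(1) xyc y(1) yzc] P1 P2 n_xy n_x_yz n_yz_x n_xy_yz n_yz_xy d3
    by (metis pw_refl)
qed


lemma same_ord_pw_sym:
  assumes fin: "finite (carrier G)" and u: "u \<in> carrier G" and v: "v \<in> carrier G"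
    and o: "ord u = ord v" and uv: "pw G u v"
  shows "pw G v u"
proof -
  have "u \<in> generate G {v}" using uv generate_pow[OF v] unfolding pw_def by auto
  hence sub: "generate G {u} \<subseteq> generate G {v}"
    using generate_subgroup_incl[OF _ generate_is_subgroup] v by auto
  have fv: "finite (generate G {v})" using generate_incl[of "{v}"] v fin finite_subset by auto
  have "card (generate G {u}) = card (generate G {v})" using generate_pow_card u v o by simp
  hence "generate G {u} = generate G {v}" using card_subset_eq[OF fv sub] by simp
  hence "v \<in> generate G {u}" using generate.incl[of v "{v}" G] by simp
  thus ?thesis using generate_pow[OF u] unfolding pw_def by auto
qed

lemma pw_gen: "u \<in> carrier G \<Longrightarrow> pw G w u \<longleftrightarrow> w \<in> generate G {u}"
  using generate_pow unfolding pw_def by auto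

lemma caseB:
  assumes nil: "nilpotent_group G" and fin: "finite (carrier G)"
    and p: "Factorial_Ring.prime (p::nat)" and q: "Factorial_Ring.prime q"
    and pq: "p \<noteq> q" and dp: "p ^ 2 dvd order G" and dq: "q dvd order G"
  shows "\<not> power_graph_is_cograph G"
proof -
  obtain P where P: "subgroup P G" "card P = p ^ 2" using subgroup_prime_power[OF fin p dp] by blast
  obtain y where y: "y \<in> carrier G" "ord y = q" using cauchy[OF fin q dq] by blast
  have p1: "p > 1" using p prime_gt_1_nat by blast
  have npq: "\<not> p dvd q" "\<not> q dvd p"
    using p q pq by (metis prime_nat_iff prime_gt_1_nat less_irrefl)+
  have nqp2: "\<not> q dvd p ^ 2" using npq q prime_dvd_power by blast
  have np2q: "\<not> p ^ 2 dvd q" using npq by (metis dvd_power dvd_trans p1 zero_less_numeral pos2)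
  have np2pq: "\<not> p ^ 2 dvd p * q"
  proof
    assume "p ^ 2 dvd p * q" hence "p * p dvd p * q" by (simp add: power2_eq_square)
    thus False using p1 npq by simp
  qed
  have Pc: "\<And>h. h \<in> P \<Longrightarrow> h \<in> carrier G" using P subgroup.subset by blast
  have ordP: "ord h = 1 \<or> ord h = p \<or> ord h = p ^ 2" if h: "h \<in> P" for h
  proof -
    have "ord h dvd p ^ 2" using ord_dvd_card_subgroup[OF P(1) h] P by simp
    then obtain i where "i \<le> 2" "ord h = p ^ i" using divides_primepow_nat[OF p] by blast
    thus ?thesis by (cases i; cases "i - 1"; auto simp: power2_eq_square)
  qed
  have comm: "h \<otimes> y = y \<otimes> h" "coprime (ord h) (ord y)" if "h \<in> carrier G" "ord h = p \<or> ord h = p ^ 2" for h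
  proof -
    show cop: "coprime (ord h) (ord y)" using that y p q pq
      by (auto simp: primes_coprime coprime_power_left_iff)
    show "h \<otimes> y = y \<otimes> h" using nilpotent_comm[OF nil that(1) y(1) cop] .
  qed
  show ?thesis
  proof (cases "\<exists>w\<in>P. ord w = p ^ 2")
    case True
    then obtain w where w: "w \<in> P" "ord w = p ^ 2" by blast
    have wc: "w \<in> carrier G" using Pc w by blast
    define x where "x = w [^] p"
    have xc: "x \<in> carrier G" using wc x_def by simp
    have ox: "ord x = p" unfolding x_def using ord_pow[OF wc, of p] w p1 by (simp add: power2_eq_square)
    have pxw: "pw G x w" unfolding pw_def x_def by (metis int_pow_int)
    note cx = comm[OF xc] 
    have xy: "x \<otimes> y = y \<otimes> x" and cxy: "coprime (ord x) (ord y)" using cx ox by auto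
    note P1 = pw_comm2[OF xc y(1) xy cxy]
    have xyc: "x \<otimes> y \<in> carrier G" using xc y by simp
    have oxy: "ord (x \<otimes> y) dvd p * q" using ord_mul_divides[OF xy xc y(1)] ox y by simp
    have n_xy: "\<not> pw G x y" "\<not> pw G y x" using npw_ord xc y ox npq by auto
    have n_yw: "\<not> pw G y w" using npw_ord[OF wc] y w nqp2 by simp
    have n_wy: "\<not> pw G w y" using npw_ord[OF y(1)] y w np2q by simp
    have n_w_xy: "\<not> pw G w (x \<otimes> y)"
    proof
      assume "pw G w (x \<otimes> y)"
      hence "p ^ 2 dvd p * q" using ord_dvd_of_pw[OF xyc] oxy w by (metis dvd_trans)
      thus False using np2pq by simp
    qed
    have n_xy_w: "\<not> pw G (x \<otimes> y) w" using pw_trans[OF y(1) xyc wc P1(2)] n_yw by blast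
    have d1: "w \<noteq> x" using w ox p1 by (metis power2_eq_square less_irrefl nat_mult_eq_cancel1 mult.right_neutral zero_less_one less_trans)
    have d2: "x \<noteq> x \<otimes> y" using P1(2) n_xy by auto
    have d3: "x \<otimes> y \<noteq> y" using P1(1) n_xy by auto
    show ?thesis
      using not_cograph_P4[OF wc xc xyc y(1)] pxw P1 n_xy n_yw n_wy n_w_xy n_xy_w d1 d2 d3
      by blast
  next
    case False
    hence ordP': "ord h = 1 \<or> ord h = p" if "h \<in> P" for h using ordP that by blast
    have "card P > 1" using P p1 less_1_mult[OF p1 p1] by (simp add: power2_eq_square)
    have "\<not> P \<subseteq> {\<one>}"
    proof
      assume "P \<subseteq> {\<one>}"
      hence "card P \<le> card {\<one>}" by (intro card_mono) auto
      thus False using \<open>card P > 1\<close> by simp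
    qed
    then obtain x where x: "x \<in> P" "x \<noteq> \<one>" by blast
    have xc: "x \<in> carrier G" using Pc x by blast
    have ox: "ord x = p" using ordP'[OF x(1)] ord_eq_1[OF xc] x by auto
    have "card (generate G {x}) = p" using generate_pow_card[OF xc] ox by simp
    moreover have "p < p ^ 2" using p1 by (simp add: power2_eq_square)
    ultimately have "\<not> P \<subseteq> generate G {x}"
      using card_mono[of "generate G {x}" P] generate_incl[of "{x}"] xc fin finite_subset P(2)
      by (metis empty_subsetI insert_subset leD)
    then obtain x' where x': "x' \<in> P" "x' \<notin> generate G {x}" by blast
    have x'c: "x' \<in> carrier G" using Pc x' by blast
    have "x' \<noteq> \<one>" using x' generate.one by metis
    hence ox': "ord x' = p" using ordP'[OF x'(1)] ord_eq_1[OF x'c] by auto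
    have n_x'x: "\<not> pw G x' x" using pw_gen[OF xc] x' by blast
    have n_xx': "\<not> pw G x x'" using same_ord_pw_sym[OF fin xc x'c] ox ox' n_x'x by auto
    have xy: "x \<otimes> y = y \<otimes> x" and cxy: "coprime (ord x) (ord y)" using comm[OF xc] ox by auto
    have x'y: "x' \<otimes> y = y \<otimes> x'" and cx'y: "coprime (ord x') (ord y)" using comm[OF x'c] ox' by auto
    note P1 = pw_comm2[OF xc y(1) xy cxy]
    note P2 = pw_comm2[OF x'c y(1) x'y cx'y]
    have xyc: "x \<otimes> y \<in> carrier G" using xc y by simp
    have vc: "x' \<otimes> y \<in> carrier G" using x'c y by simp
    have n_xy: "\<not> pw G x y" "\<not> pw G y x" using npw_ord xc y ox npq by auto
    have n_x_v: "\<not> pw G x (x' \<otimes> y)"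
    proof
      assume "pw G x (x' \<otimes> y)"
      hence "pw G x x'" using pw_proj[OF x'c y(1) x'y cx'y] ox ox' by simp
      thus False using n_xx' by simp
    qed
    have n_v_x: "\<not> pw G (x' \<otimes> y) x" using pw_trans[OF y(1) vc xc P2(2)] n_xy by blast
    have n_xy_v: "\<not> pw G (x \<otimes> y) (x' \<otimes> y)" using pw_trans[OF xc xyc vc P1(1)] n_x_v by blast
    have n_v_xy: "\<not> pw G (x' \<otimes> y) (x \<otimes> y)"
    proof
      assume "pw G (x' \<otimes> y) (x \<otimes> y)"
      hence "pw G x' (x \<otimes> y)" using pw_trans[OF x'c vc xyc P2(1)] by blast
      hence "pw G x' x" using pw_proj[OF xc y(1) xy cxy] ox ox' by simp
      thus False using n_x'x by simp
    qed
    have d1: "x \<noteq> x \<otimes> y" using P1(2) n_xy by auto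
    have d2: "x \<otimes> y \<noteq> y" using P1(1) n_xy by auto
    have d3: "y \<noteq> x' \<otimes> y"
    proof
      assume "y = x' \<otimes> y" hence "pw G x' y" using P2(1) by simp
      thus False using npw_ord[OF y(1)] ox' y npq by simp
    qed
    show ?thesis
      using not_cograph_P4[OF xc xyc y(1) vc] P1 P2 n_xy n_x_v n_v_x n_xy_v n_v_xy d1 d2 d3
      by blast
  qed
qed

end


lemma nt_split:
  fixes n :: nat
  assumes n: "n > 0" and np: "\<not> (\<exists>p k. Factorial_Ring.prime p \<and> n = p ^ k)"
  shows "\<exists>p q. Factorial_Ring.prime p \<and> Factorial_Ring.prime q \<and> p \<noteq> q \<and> p dvd n \<and> q dvd n"
proof -
  have "n \<noteq> 1"
  proof
    assume "n = 1"
    hence "Factorial_Ring.prime (2::nat) \<and> n = 2 ^ 0" by simp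
    thus False using np by blast
  qed
  then obtain p where p: "Factorial_Ring.prime p" "p dvd n" using prime_factor_nat by blast
  obtain m where m: "n = p ^ multiplicity p n * m" "\<not> p dvd m"
    by (rule multiplicity_decompose'[of n p]) (use n p in auto)
  have "m \<noteq> 1"
  proof
    assume "m = 1"
    hence "n = p ^ multiplicity p n" using m by simp
    thus False using np p by blast
  qed
  then obtain q where q: "Factorial_Ring.prime q" "q dvd m" using prime_factor_nat by blast
  have "q \<noteq> p" using q(2) m(2) by blast
  moreover have "q dvd n" by (subst m(1)) (rule dvd_mult[OF q(2)])
  ultimately show ?thesis using p q by blast
qed

lemma nt_cases:
  fixes n p q :: nat
  assumes n: "n > 0" and p: "Factorial_Ring.prime p" and q: "Factorial_Ring.prime q" and pq: "p \<noteq> q"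
    and dp: "p dvd n" and dq: "q dvd n"
  shows "n = p * q \<or> (\<exists>r. Factorial_Ring.prime r \<and> r \<noteq> p \<and> r \<noteq> q \<and> r dvd n) \<or> p ^ 2 dvd n \<or> q ^ 2 dvd n"
proof -
  have "coprime p q" using p q pq by (simp add: primes_coprime)
  hence "p * q dvd n" using divides_mult dp dq by blast
  then obtain m where m: "n = p * q * m" by (auto elim: dvdE)
  show ?thesis
  proof (cases "m = 1")
    case True then show ?thesis using m by simp
  next
    case False
    then obtain r where r: "Factorial_Ring.prime r" "r dvd m" using prime_factor_nat by blast
    have rn: "r dvd n" using r m by simp
    show ?thesis
    proof (cases "r = p")
      case True
      then obtain t where "m = p * t" using r by (auto elim: dvdE)
      hence "n = (p * p) * (q * t)" using m by simp
      hence "p * p dvd n" by (rule dvdI)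
      thus ?thesis by (simp add: power2_eq_square)
    next
      case rp: False
      show ?thesis
      proof (cases "r = q")
        case True
        then obtain t where "m = q * t" using r by (auto elim: dvdE)
        hence "n = (q * q) * (p * t)" using m by simp
        hence "q * q dvd n" by (rule dvdI)
        thus ?thesis by (simp add: power2_eq_square)
      next
        case False then show ?thesis using rp r rn by blast
      qed
    qed
  qed
qed

lemma (in group) pq_cyclic:
  assumes nil: "nilpotent_group G" and fin: "finite (carrier G)"
    and p: "Factorial_Ring.prime (p::nat)" and q: "Factorial_Ring.prime q"
    and pq: "p \<noteq> q" and ord: "order G = p * q"
  shows "cyclic_group G"
proof -
  obtain x where x: "x \<in> carrier G" "ord x = p" using cauchy[OF fin p] ord by auto
  obtain y where y: "y \<in> carrier G" "ord y = q" using cauchy[OF fin q] ord by auto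
  have cxy: "coprime (ord x) (ord y)" using x y p q pq by (simp add: primes_coprime)
  have xy: "x \<otimes> y = y \<otimes> x" using nilpotent_comm[OF nil x(1) y(1) cxy] .
  note P1 = pw_comm2[OF x(1) y(1) xy cxy]
  define g where "g = x \<otimes> y"
  have gc: "g \<in> carrier G" using x y g_def by simp
  have "p dvd ord g" using ord_dvd_of_pw[OF gc, of x] P1(1) x(2) unfolding g_def by simp
  moreover have "q dvd ord g" using ord_dvd_of_pw[OF gc, of y] P1(2) y(2) unfolding g_def by simp
  ultimately have "p * q dvd ord g" using divides_mult cxy x y by auto
  moreover have "ord g dvd p * q" using ord_mul_divides[OF xy x(1) y(1)] x y g_def by simp
  ultimately have og: "ord g = p * q" by (simp add: dvd_antisym)
  have "card (generate G {g}) = card (carrier G)" using generate_pow_card[OF gc] og ord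
    unfolding order_def by simp
  hence "generate G {g} = carrier G"
    using card_subset_eq[OF fin generate_incl[of "{g}"]] gc by simp
  hence c1: "carrier G = {g [^] (k :: int) | k. k \<in> UNIV}" using generate_pow[OF gc] by simp
  have "{g [^] (k :: int) | k. k \<in> UNIV} = range (\<lambda>n::int. g [^] n)" by blast
  hence "carrier G = range (\<lambda>n::int. g [^] n)" using c1 by simp
  thus ?thesis using cyclic_group gc by blast
qed

theorem mainTheorem5:
  fixes G :: "('a, 'b) monoid_scheme"
  assumes "nilpotent_group G" and "finite (carrier G)"
  shows "power_graph_is_cograph G \<longleftrightarrow>
           ((\<exists>p k. Factorial_Ring.prime (p::nat) \<and> order G = p ^ k) \<or>
            (\<exists>p q. Factorial_Ring.prime (p::nat) \<and> Factorial_Ring.prime q \<and> p \<noteq> q \<and> order G = p * q \<and> cyclic_group G))"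
proof -
  have grp: "group G" using assms(1) unfolding nilpotent_group_def by blast
  show ?thesis
  proof
    assume cg: "power_graph_is_cograph G"
    show "(\<exists>p k. Factorial_Ring.prime (p::nat) \<and> order G = p ^ k) \<or>
            (\<exists>p q. Factorial_Ring.prime (p::nat) \<and> Factorial_Ring.prime q \<and> p \<noteq> q \<and> order G = p * q \<and> cyclic_group G)"
    proof (cases "\<exists>p k. Factorial_Ring.prime (p::nat) \<and> order G = p ^ k")
      case True thus ?thesis by blast
    next
      case False
      hence np: "\<not> (\<exists>p k. Factorial_Ring.prime (p::nat) \<and> order G = p ^ k)" .
      have n0: "order G > 0" using monoid.order_gt_0_iff_finite[OF group.is_monoid[OF grp]] assms(2) by blast
      obtain p q where pq: "Factorial_Ring.prime p" "Factorial_Ring.prime q" "p \<noteq> q" "p dvd order G" "q dvd order G"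
        using nt_split[OF n0] np by blast
      from nt_cases[OF n0 pq] have "\<exists>p q. Factorial_Ring.prime (p::nat) \<and> Factorial_Ring.prime q \<and> p \<noteq> q \<and> order G = p * q \<and> cyclic_group G"
      proof (elim disjE exE conjE)
        assume "order G = p * q"
        thus ?thesis using group.pq_cyclic[OF grp assms pq(1,2,3)] pq by blast
      next
        fix r assume r: "Factorial_Ring.prime r" "r \<noteq> p" "r \<noteq> q" "r dvd order G"
        have "\<not> power_graph_is_cograph G"
          using group.caseA[OF grp assms pq(1,2) r(1) pq(3) r(2)[symmetric] r(3)[symmetric] pq(4,5) r(4)] .
        thus ?thesis using cg by blast
      next
        assume "p ^ 2 dvd order G"
        thus ?thesis using group.caseB[OF grp assms pq(1,2,3) _ pq(5)] cg by blast
      next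
        assume "q ^ 2 dvd order G"
        hence "\<not> power_graph_is_cograph G" using group.caseB[OF grp assms pq(2,1) pq(3)[symmetric] _ pq(4)] by blast
        thus ?thesis using cg by blast
      qed
      thus ?thesis by blast
    qed
  next
    assume "(\<exists>p k. Factorial_Ring.prime (p::nat) \<and> order G = p ^ k) \<or>
            (\<exists>p q. Factorial_Ring.prime (p::nat) \<and> Factorial_Ring.prime q \<and> p \<noteq> q \<and> order G = p * q \<and> cyclic_group G)"
    thus "power_graph_is_cograph G"
    proof (elim disjE exE conjE)
      fix p k assume "Factorial_Ring.prime (p::nat)" "order G = p ^ k"
      thus ?thesis using group.pgroup_cograph[OF grp assms(2)] by blast
    next
      fix p q assume "Factorial_Ring.prime (p::nat)" "Factorial_Ring.prime q" "p \<noteq> q" "order G = p * q" "cyclic_group G"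
      thus ?thesis using group.cyclic_pq_cograph[OF grp assms(2)] by blast
    qed
  qed
qed



end
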